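(* Let $d$, $n$ and $m$ be integers with $d\geq 3$, $n\geq 6$ and $3n-5\leq m\leq\binom{n}{2}$. For each $G\in T_{n,m}$ it holds that $\lambda_{st}^d(G)\leq n-1$, with equality if and only if $G\in T_{n,m}^u$.
   Context: All graphs are finite, simple and undirected. A two-terminal graph is a graph $G$ together with two distinguished vertices $s,t$ (the terminals). $T_{n,m}$ denotes the set of all pairwise nonisomorphic (with isomorphisms preserving the set of terminals) two-terminal graphs with $n$ vertices and $m$ edges. For a positive integer $d$, a $d$-pathset of a two-terminal graph $G$ is a spanning subgraph of $G$ containing a path of length (number of edges) at most $d$ joining $s$ and $t$; $N_i^d(G)$ is the number of $d$-pathsets of $G$ with exactly $i$ edges. For $G\in T_{n,m}$ and $i\in\{1,\ldots,m\}$, $B_i^d(G)=\binom{m}{i}-N_{m-i}^d(G)$ is the number of $i$-element edge sets $U$ of $G$ such that $G-U$ is not a $d$-pathset (i.e. contains no $s$–$t$ path of length at most $d$). $\lambda_{st}^d(G)$ is the least positive integer $j$ with $B_j^d(G)>0$. A vertex is universal if it is adjacent to all other vertices; $T_{n,m}^u$ is the set of graphs in $T_{n,m}$ in which both terminals are universal. *)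

theory Defs
  imports Main
begin

definition two_terminal_graph :: "'a set \<Rightarrow> 'a set set \<Rightarrow> 'a \<Rightarrow> 'a \<Rightarrow> bool" where
  "two_terminal_graph V E s t \<longleftrightarrow>
     finite V \<and> (\<forall>e\<in>E. e \<subseteq> V \<and> card e = 2) \<and> s \<in> V \<and> t \<in> V \<and> s \<noteq> t"

definition is_path :: "'a set set \<Rightarrow> 'a list \<Rightarrow> 'a \<Rightarrow> 'a \<Rightarrow> bool" where
  "is_path F p s t \<longleftrightarrow> p \<noteq> [] \<and> hd p = s \<and> last p = t \<and> distinct p \<and>
     (\<forall>i. Suc i < length p \<longrightarrow> {p ! i, p ! Suc i} \<in> F)"

definition is_d_pathset :: "nat \<Rightarrow> 'a set set \<Rightarrow> 'a \<Rightarrow> 'a \<Rightarrow> bool" where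
  "is_d_pathset d F s t \<longleftrightarrow> (\<exists>p. is_path F p s t \<and> length p - 1 \<le> d)"

definition B_count :: "nat \<Rightarrow> 'a set set \<Rightarrow> 'a \<Rightarrow> 'a \<Rightarrow> nat \<Rightarrow> nat" where
  "B_count d E s t i = card {U. U \<subseteq> E \<and> card U = i \<and> \<not> is_d_pathset d (E - U) s t}"

definition lambda_st :: "nat \<Rightarrow> 'a set set \<Rightarrow> 'a \<Rightarrow> 'a \<Rightarrow> nat" where
  "lambda_st d E s t = (LEAST j. 0 < j \<and> 0 < B_count d E s t j)"

definition universal :: "'a set \<Rightarrow> 'a set set \<Rightarrow> 'a \<Rightarrow> bool" where
  "universal V E v \<longleftrightarrow> (\<forall>w\<in>V. w \<noteq> v \<longrightarrow> {v, w} \<in> E)"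

end

theory Submission
  imports Defs
begin

lemma upper_ex:
  assumes fin: "finite E" and SE: "S \<subseteq> E"
    and H: "\<And>U. U \<subseteq> E \<Longrightarrow> S \<subseteq> U \<Longrightarrow> \<not> is_d_pathset d (E - U) s t"
    and k: "0 < k" "card S \<le> k" "k \<le> card E"
  shows "0 < B_count d E s t k"
proof -
  have fSS: "finite S" using SE fin finite_subset by blast
  have "k - card S \<le> card (E - S)" using k SE fin fSS by (simp add: card_Diff_subset)
  then obtain R where R: "R \<subseteq> E - S" "card R = k - card S"
    using obtain_subset_with_card_n by metis
  define U where "U = S \<union> R"
  have fR: "finite R" using R fin finite_subset by blast
  have dj: "S \<inter> R = {}" using R by blast
  have cU: "card U = k" unfolding U_def using card_Un_disjoint[OF fSS fR dj] R k by simp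
  have UE: "U \<subseteq> E" using R SE unfolding U_def by blast
  have SU: "S \<subseteq> U" unfolding U_def by blast
  let ?A = "{U. U \<subseteq> E \<and> card U = k \<and> \<not> is_d_pathset d (E - U) s t}"
  have "U \<in> ?A" using UE cU H[OF UE SU] by blast
  moreover have "finite ?A"
    by (rule finite_subset[of _ "Pow E"]) (use fin in auto)
  ultimately have "?A \<noteq> {}" "finite ?A" by blast+
  then show "0 < B_count d E s t k" unfolding B_count_def by (simp add: card_gt_0_iff)
qed

lemma upper:
  assumes fin: "finite E" and SE: "S \<subseteq> E"
    and H: "\<And>U. U \<subseteq> E \<Longrightarrow> S \<subseteq> U \<Longrightarrow> \<not> is_d_pathset d (E - U) s t"
    and k: "0 < k" "card S \<le> k" "k \<le> card E"
  shows "lambda_st d E s t \<le> k"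
  unfolding lambda_st_def using k upper_ex[OF assms] by (intro Least_le) auto

lemma cut_s:
  assumes "s \<noteq> t" "U \<subseteq> E" "{e\<in>E. s \<in> e} \<subseteq> U"
  shows "\<not> is_d_pathset d (E - U) s t"
proof
  assume "is_d_pathset d (E - U) s t"
  then obtain p where p: "is_path (E - U) p s t" unfolding is_d_pathset_def by auto
  then have ne: "p \<noteq> []" "hd p = s" "last p = t" unfolding is_path_def by auto
  have "length p \<noteq> 1"
  proof
    assume "length p = 1"
    then obtain x where "p = [x]" by (cases p) auto
    thus False using ne assms by auto
  qed
  hence "Suc 0 < length p" using ne by (cases p) auto
  hence "{p ! 0, p ! Suc 0} \<in> E - U" using p unfolding is_path_def by auto
  moreover have "p ! 0 = s" using ne by (cases p) auto
  ultimately show False using assms by auto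
qed

lemma cut_t:
  assumes "s \<noteq> t" "U \<subseteq> E" "{e\<in>E. t \<in> e} \<subseteq> U"
  shows "\<not> is_d_pathset d (E - U) s t"
proof
  assume "is_d_pathset d (E - U) s t"
  then obtain p where p: "is_path (E - U) p s t" unfolding is_d_pathset_def by auto
  then have ne: "p \<noteq> []" "hd p = s" "last p = t" unfolding is_path_def by auto
  have "length p \<noteq> 1"
  proof
    assume "length p = 1"
    then obtain x where "p = [x]" by (cases p) auto
    thus False using ne assms by auto
  qed
  hence L: "Suc (length p - 2) < length p" using ne by (cases p) auto
  hence "{p ! (length p - 2), p ! Suc (length p - 2)} \<in> E - U" using p unfolding is_path_def by auto
  moreover have "p ! Suc (length p - 2) = t"
  proof -
    have "Suc (length p - 2) = length p - 1" using L by linarith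
    thus ?thesis using ne last_conv_nth[of p] by simp
  qed
  ultimately show False using assms by auto
qed

lemma star_card:
  assumes "finite V" "\<forall>e\<in>E. e \<subseteq> V \<and> card e = 2" "s \<in> V" "X \<subseteq> V"
    "\<forall>w\<in>X - {s}. {s, w} \<notin> E" "s \<in> X"
  shows "card {e\<in>E. s \<in> e} \<le> card V - card X"
proof -
  have "{e\<in>E. s \<in> e} \<subseteq> (\<lambda>w. {s, w}) ` (V - X)"
  proof
    fix e assume e: "e \<in> {e\<in>E. s \<in> e}"
    then obtain x y where xy: "e = {x, y}" "x \<noteq> y" using assms(2) by (auto simp: card_2_iff)
    then obtain w where w: "e = {s, w}" "w \<noteq> s" using e by auto
    have "w \<in> V" using w e assms(2) by auto
    hence "w \<in> V - X" using assms(5) w e by auto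
    thus "e \<in> (\<lambda>w. {s, w}) ` (V - X)" using w by auto
  qed
  hence "card {e\<in>E. s \<in> e} \<le> card (V - X)"
    using assms(1) by (meson card_image_le finite_Diff card_mono finite_imageI le_trans)
  thus ?thesis using assms by (simp add: card_Diff_subset finite_subset)
qed

lemma path2: "{s, t} \<in> F \<Longrightarrow> s \<noteq> t \<Longrightarrow> is_path F [s, t] s t"
  unfolding is_path_def by (auto simp: less_Suc_eq)

lemma path3: "{s, w} \<in> F \<Longrightarrow> {w, t} \<in> F \<Longrightarrow> distinct [s, w, t] \<Longrightarrow> is_path F [s, w, t] s t"
  unfolding is_path_def by (auto simp: less_Suc_eq nth_Cons')

lemma pathset_univ:
  assumes "finite V" "s \<in> V" "t \<in> V" "s \<noteq> t" "d \<ge> 2"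
    "universal V E s" "universal V E t" "U \<subseteq> E" "finite E" "card U < card V - 1"
  shows "is_d_pathset d (E - U) s t"
proof (cases "{s, t} \<in> U")
  case False
  have "{s,t} \<in> E" using assms unfolding universal_def by auto
  then show ?thesis unfolding is_d_pathset_def using path2[of s t "E - U"] False assms
    by (intro exI[of _ "[s,t]"]) auto
next
  case True
  show ?thesis
  proof (cases "\<exists>w\<in>V - {s,t}. {s,w} \<notin> U \<and> {w,t} \<notin> U")
    case True
    then obtain w where w: "w \<in> V - {s,t}" "{s,w} \<notin> U" "{w,t} \<notin> U" by auto
    have "{s,w} \<in> E" "{w,t} \<in> E" using w assms unfolding universal_def
      by (auto simp: insert_commute)
    then show ?thesis unfolding is_d_pathset_def using path3[of s w "E - U" t] w assms
      by (intro exI[of _ "[s,w,t]"]) auto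
  next
    case False
    define g where "g w = (if {s,w} \<in> U then {s,w} else {w,t})" for w
    have gi: "g ` (V - {s,t}) \<subseteq> U - {{s,t}}"
      using False assms(4) unfolding g_def by (auto simp: doubleton_eq_iff)
    have "inj_on g (V - {s,t})"
      unfolding inj_on_def g_def using assms(4) by (auto simp: doubleton_eq_iff split: if_splits)
    hence "card (V - {s,t}) \<le> card (U - {{s,t}})"
      using gi assms by (metis card_inj_on_le finite_Diff finite_subset)
    moreover have "card (V - {s,t}) = card V - 2" using assms by auto
    moreover have "card (U - {{s,t}}) = card U - 1" using True assms finite_subset by auto
    moreover have "card U > 0" using True assms finite_subset card_gt_0_iff by blast
    ultimately have False using assms by linarith
    then show ?thesis ..
  qed
qed

theorem lemma12:
  fixes V :: "'a set" and E :: "'a set set" and s t :: 'a and d n m :: nat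
  assumes "two_terminal_graph V E s t"
    and "card V = n" and "card E = m"
    and "d \<ge> 3" and "n \<ge> 6" and "3 * n - 5 \<le> m" and "m \<le> n choose 2"
  shows "lambda_st d E s t \<le> n - 1 \<and>
         (lambda_st d E s t = n - 1 \<longleftrightarrow> universal V E s \<and> universal V E t)"
proof -
  have g: "finite V" "\<forall>e\<in>E. e \<subseteq> V \<and> card e = 2" "s \<in> V" "t \<in> V" "s \<noteq> t"
    using assms(1) unfolding two_terminal_graph_def by auto
  have "E \<subseteq> Pow V" using g(2) by blast
  hence fE: "finite E" using g(1) finite_subset by blast
  have cV: "card V = n" and cE: "card E = m" and n6: "n \<ge> 6" and d3: "d \<ge> 3" using assms by auto
  have mbig: "n - 1 \<le> m" using assms(6) n6 by linarith
  define Ss where "Ss = {e\<in>E. s \<in> e}"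
  define St where "St = {e\<in>E. t \<in> e}"
  have SsE: "Ss \<subseteq> E" and StE: "St \<subseteq> E" unfolding Ss_def St_def by auto
  have Hs: "\<And>U. U \<subseteq> E \<Longrightarrow> Ss \<subseteq> U \<Longrightarrow> \<not> is_d_pathset d (E - U) s t"
    by (rule cut_s[OF g(5)]) (auto simp: Ss_def)
  have Ht: "\<And>U. U \<subseteq> E \<Longrightarrow> St \<subseteq> U \<Longrightarrow> \<not> is_d_pathset d (E - U) s t"
    by (rule cut_t[OF g(5)]) (auto simp: St_def)
  have cSs: "card Ss \<le> n - 1" using star_card[of V E s "{s}"] g cV unfolding Ss_def by auto
  have cSt: "card St \<le> n - 1" using star_card[of V E t "{t}"] g cV unfolding St_def by auto
  have up: "lambda_st d E s t \<le> n - 1"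
    by (rule upper[OF fE SsE Hs]) (use cSs n6 mbig cE in auto)
  have ns: "lambda_st d E s t \<le> n - 2" if nu: "\<not> universal V E s"
  proof -
    obtain w where w: "w \<in> V" "w \<noteq> s" "{s,w} \<notin> E" using nu unfolding universal_def by blast
    have "card {s,w} = 2" using w by auto
    hence "card Ss \<le> n - 2" using star_card[of V E s "{s,w}"] g cV w unfolding Ss_def by auto
    thus ?thesis by (intro upper[OF fE SsE Hs]) (use n6 mbig cE in auto)
  qed
  have nt: "lambda_st d E s t \<le> n - 2" if nu: "\<not> universal V E t"
  proof -
    obtain w where w: "w \<in> V" "w \<noteq> t" "{t,w} \<notin> E" using nu unfolding universal_def by blast
    have "card {t,w} = 2" using w by auto
    hence "card St \<le> n - 2" using star_card[of V E t "{t,w}"] g cV w unfolding St_def by auto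
    thus ?thesis by (intro upper[OF fE StE Ht]) (use n6 mbig cE in auto)
  qed
  have lo: "n - 1 \<le> lambda_st d E s t" if u: "universal V E s" "universal V E t"
  proof -
    have B1: "0 < B_count d E s t (n - 1)"
      by (rule upper_ex[OF fE SsE Hs]) (use cSs n6 mbig cE in auto)
    have P: "0 < n - 1 \<and> 0 < B_count d E s t (n - 1)" using B1 n6 by simp
    have L: "0 < lambda_st d E s t \<and> 0 < B_count d E s t (lambda_st d E s t)"
      unfolding lambda_st_def by (rule LeastI[of "\<lambda>j. 0 < j \<and> 0 < B_count d E s t j", OF P])
    have "{U. U \<subseteq> E \<and> card U = lambda_st d E s t \<and> \<not> is_d_pathset d (E - U) s t} \<noteq> {}"
    proof
      assume e: "{U. U \<subseteq> E \<and> card U = lambda_st d E s t \<and> \<not> is_d_pathset d (E - U) s t} = {}"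
      have "B_count d E s t (lambda_st d E s t) = 0" unfolding B_count_def e by (rule card.empty)
      thus False using L by simp
    qed
    then obtain U where U: "U \<subseteq> E" "card U = lambda_st d E s t" "\<not> is_d_pathset d (E - U) s t"
      by blast
    show ?thesis
    proof (rule ccontr)
      assume "\<not> ?thesis"
      hence lt: "card U < card V - 1" using U(2) cV by linarith
      have d2: "d \<ge> 2" using d3 by simp
      have "is_d_pathset d (E - U) s t"
        by (rule pathset_univ[OF g(1) g(3) g(4) g(5) d2 u(1) u(2) U(1) fE lt])
      thus False using U(3) by simp
    qed
  qed
  have "lambda_st d E s t = n - 1 \<longleftrightarrow> universal V E s \<and> universal V E t"
  proof
    assume "lambda_st d E s t = n - 1"
    thus "universal V E s \<and> universal V E t" using ns nt n6 by fastforce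
  next
    assume "universal V E s \<and> universal V E t"
    thus "lambda_st d E s t = n - 1" using lo up by fastforce
  qed
  thus ?thesis using up by blast
qed

end
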